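(* Under the assumptions below, the eigenvalues $\widetilde{\lambda}_n$ of the differential operator $\mathbf{L}$ associated with the polynomials $q_n$ orthonormal with respect to the discrete Sobolev inner product $(f,g)_S$ satisfy $$\lim_{n\to+\infty}\frac{\widetilde{\lambda}_n}{n^{2(aj+b)+3}}=\frac{2\gamma MC_j^2}{(2(aj+b)+3)(2(aj+b)+1)}\quad \text{if } \gamma\neq0,$$ $$\lim_{n\to+\infty}\frac{\widetilde{\lambda}_n}{n^{2(aj+b+1)}}=\frac{\delta MC_j^2}{2(aj+b+1)(2(aj+b)+1)}\quad \text{if } \gamma=0.$$
   Context: Let $\mu$ be a classical nonsymmetric measure on the real line with $d\mu(x)=w(x)dx$ (Jacobi weight $(1-x)^{\alpha}(1+x)^{\beta}$ on $(-1,1)$ with $c\in\{-1,1\}$, or Laguerre weight $x^{\alpha}e^{-x}$ on $(0,\infty)$ with $c=0$), and consider the discrete Sobolev inner product $(f,g)_S=\int f(x)g(x)\,d\mu+Mf^{(j)}(c)g^{(j)}(c)$ with $j\in\mathbb{N}\cup\{0\}$ and $M>0$. Let $\{p_n\}_{n\ge0}$ be the orthonormal polynomials with respect to $\mu$, eigenfunctions of the operator $\mathbf{B}=\sigma(x)\mathcal{D}^2+\tau(x)\mathcal{D}$ with eigenvalues $\lambda_n$, and let $\{q_n\}_{n\ge0}$ be the orthonormal polynomials with respect to $(f,g)_S$, which are eigenfunctions of a differential operator $\mathbf{L}=\sum_{i\ge1}r_i(x)\mathcal{D}^i$ ($\deg r_i\le i$) with eigenvalues $\widetilde{\lambda}_n=\lambda_n+M\alpha_n$,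 where $\alpha_i=0$ for $i\in\{0,1,\dots,j\}$ and $\alpha_n=\sum_{i=j+1}^n(\lambda_i-\lambda_{i-1})K_{i-1}^{(j,j)}(c,c)$ for $n\ge j+1$, with $K_n^{(r,s)}(x,y)=\sum_{i=0}^np_i^{(r)}(x)p_i^{(s)}(y)$. Assume $p_n^{(k)}(c)\approx C_k(-1)^n n^{ak+b}$ for $0\le k\le n$ (where $a_n\approx b_n$ means $a_n/b_n\to1$), with $C_k$ independent of $n$ and $2(ak+b)+1>0$, and assume $\lambda_n=\gamma n^2+\delta n$ with $\gamma,\delta\in\mathbb{R}$. *)

theory Defs
  imports "HOL-Analysis.Analysis" "HOL-Computational_Algebra.Polynomial"
begin

definition jacobi_weight :: "real \<Rightarrow> real \<Rightarrow> real \<Rightarrow> real" where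
  "jacobi_weight \<alpha> \<beta> x = (1 - x) powr \<alpha> * (1 + x) powr \<beta>"

definition laguerre_weight :: "real \<Rightarrow> real \<Rightarrow> real" where
  "laguerre_weight \<alpha> x = x powr \<alpha> * exp (- x)"

text \<open>The classical nonsymmetric setting: weight w on the interval I, with mass point c.\<close>
definition classical_nonsym :: "(real \<Rightarrow> real) \<Rightarrow> real set \<Rightarrow> real \<Rightarrow> bool" where
  "classical_nonsym w I c \<longleftrightarrow>
     (\<exists>\<alpha> \<beta>. \<alpha> > -1 \<and> \<beta> > -1 \<and> w = jacobi_weight \<alpha> \<beta> \<and> I = {-1<..<1} \<and> c \<in> {-1, 1})
   \<or> (\<exists>\<alpha>. \<alpha> > -1 \<and> w = laguerre_weight \<alpha> \<and> I = {0<..} \<and> c = 0)"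

definition orthonormal_polys :: "(real \<Rightarrow> real) \<Rightarrow> real set \<Rightarrow> (nat \<Rightarrow> real poly) \<Rightarrow> bool" where
  "orthonormal_polys w I p \<longleftrightarrow>
     (\<forall>n. degree (p n) = n) \<and>
     (\<forall>m n. set_integrable lborel I (\<lambda>x. poly (p m) x * poly (p n) x * w x) \<and>
            (LINT x:I|lborel. poly (p m) x * poly (p n) x * w x) = (if m = n then 1 else 0))"

definition kernel :: "(nat \<Rightarrow> real poly) \<Rightarrow> nat \<Rightarrow> nat \<Rightarrow> nat \<Rightarrow> real \<Rightarrow> real \<Rightarrow> real" where
  "kernel p n r s x y = (\<Sum>i\<le>n. poly ((pderiv ^^ r) (p i)) x * poly ((pderiv ^^ s) (p i)) y)"

definition sob_alpha :: "(nat \<Rightarrow> real poly) \<Rightarrow> (nat \<Rightarrow> real) \<Rightarrow> nat \<Rightarrow> real \<Rightarrow> nat \<Rightarrow> real" where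
  "sob_alpha p lam j c n =
     (if n \<le> j then 0
      else (\<Sum>i\<in>{j+1..n}. (lam i - lam (i - 1)) * kernel p (i - 1) j j c c))"

definition sob_eigenvalue :: "(nat \<Rightarrow> real poly) \<Rightarrow> (nat \<Rightarrow> real) \<Rightarrow> real \<Rightarrow> nat \<Rightarrow> real \<Rightarrow> nat \<Rightarrow> real" where
  "sob_eigenvalue p lam M j c n = lam n + M * sob_alpha p lam j c n"

end

theory Submission
  imports Defs "HOL-Real_Asymp.Real_Asymp"
begin

lemma stolz:
  fixes a b :: "nat \<Rightarrow> real"
  assumes inc: "\<And>n. b n < b (Suc n)" and lim_b: "filterlim b at_top sequentially"
    and lim: "(\<lambda>n. (a (Suc n) - a n) / (b (Suc n) - b n)) \<longlonglongrightarrow> L"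
  shows "(\<lambda>n. a n / b n) \<longlonglongrightarrow> L"
proof (rule tendstoI)
  fix e :: real assume e: "e > 0"
  have "eventually (\<lambda>n. dist ((a (Suc n) - a n) / (b (Suc n) - b n)) L < e/2) sequentially"
    using tendstoD[OF lim, of "e/2"] e by simp
  then obtain N where N: "\<And>n. n \<ge> N \<Longrightarrow> \<bar>(a (Suc n) - a n) / (b (Suc n) - b n) - L\<bar> < e/2"
    unfolding eventually_sequentially dist_real_def by blast
  have stepb: "\<bar>(a (Suc n) - a n) - L * (b (Suc n) - b n)\<bar> \<le> e/2 * (b (Suc n) - b n)" if "n \<ge> N" for n
  proof -
    have pos: "b (Suc n) - b n > 0" using inc[of n] by simp
    have "\<bar>(a (Suc n) - a n) - L * (b (Suc n) - b n)\<bar>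
        = \<bar>(a (Suc n) - a n) / (b (Suc n) - b n) - L\<bar> * (b (Suc n) - b n)"
    proof -
      have "(a (Suc n) - a n) / (b (Suc n) - b n) - L = ((a (Suc n) - a n) - L * (b (Suc n) - b n)) / (b (Suc n) - b n)"
        using pos by (simp add: field_simps)
      then show ?thesis using pos by (simp add: abs_divide)
    qed
    also have "\<dots> \<le> e/2 * (b (Suc n) - b n)"
      using N[OF that] pos by (intro mult_right_mono) auto
    finally show ?thesis .
  qed
  have acc: "\<bar>(a n - a N) - L * (b n - b N)\<bar> \<le> e/2 * (b n - b N)" if "n \<ge> N" for n
    using that
  proof (induction n rule: dec_induct)
    case base then show ?case by simp
  next
    case (step m)
    have "\<bar>(a (Suc m) - a N) - L * (b (Suc m) - b N)\<bar>
       \<le> \<bar>(a m - a N) - L * (b m - b N)\<bar> + \<bar>(a (Suc m) - a m) - L * (b (Suc m) - b m)\<bar>"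
      by (smt (verit, ccfv_SIG) right_diff_distrib)
    also have "\<dots> \<le> e/2 * (b m - b N) + e/2 * (b (Suc m) - b m)"
      using step.IH stepb[OF step.hyps(1)] by linarith
    finally show ?case by (simp add: right_diff_distrib)
  qed
  define D where "D = \<bar>a N - L * b N\<bar> + e/2 * \<bar>b N\<bar>"
  have D0: "D \<ge> 0" using e by (simp add: D_def)
  have ev: "eventually (\<lambda>n. b n > max 1 (2 * D / e)) sequentially"
    using lim_b unfolding filterlim_at_top_dense by blast
  show "eventually (\<lambda>n. dist (a n / b n) L < e) sequentially"
    using ev eventually_ge_at_top[of N]
  proof eventually_elim
    case (elim n)
    have bpos: "b n > 0" using elim by simp
    have "\<bar>a n - L * b n\<bar> \<le> D + e/2 * b n"
    proof -
      have t1: "\<bar>a n - L * b n\<bar> \<le> \<bar>a N - L * b N\<bar> + \<bar>(a n - a N) - L * (b n - b N)\<bar>"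
        by (simp add: abs_triangle_ineq right_diff_distrib order_trans[OF _ abs_triangle_ineq, rotated] )
      have t2: "e/2 * (b n - b N) \<le> e/2 * b n + e/2 * \<bar>b N\<bar>"
      proof -
        have "- b N \<le> \<bar>b N\<bar>" by simp
        hence "e/2 * (- b N) \<le> e/2 * \<bar>b N\<bar>" using e by (intro mult_left_mono) auto
        thus ?thesis by (simp add: right_diff_distrib)
      qed
      show ?thesis using t1 t2 acc[OF elim(2)] unfolding D_def by linarith
    qed
    also have "\<dots> < e/2 * b n + e/2 * b n"
    proof -
      have "2 * D / e < b n" using elim by simp
      hence "2 * D < b n * e" using e by (simp add: divide_less_eq)
      thus ?thesis by (simp add: mult.commute)
    qed
    finally have "\<bar>a n - L * b n\<bar> < e * b n" by simp
    hence "\<bar>a n - L * b n\<bar> / b n < e" using bpos by (simp add: divide_less_eq)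
    moreover have "\<bar>a n - L * b n\<bar> / b n = \<bar>a n / b n - L\<bar>"
    proof -
      have "a n / b n - L = (a n - L * b n) / b n" using bpos by (simp add: field_simps)
      thus ?thesis using bpos by (simp add: abs_divide)
    qed
    ultimately show ?case by (simp add: dist_real_def)
  qed
qed
lemma sumasym:
  fixes t :: "nat \<Rightarrow> real" and r L :: real
  assumes r: "r > -1" and lim: "(\<lambda>n. t n / real n powr r) \<longlonglongrightarrow> L"
  shows "(\<lambda>n. (\<Sum>i<n. t i) / real n powr (r+1)) \<longlonglongrightarrow> L/(r+1)"
proof (rule stolz)
  show "real n powr (r+1) < real (Suc n) powr (r+1)" for n using r by (intro powr_less_mono2) auto
  show "filterlim (\<lambda>n. real n powr (r+1)) at_top sequentially" using r by real_asymp
  have q: "(\<lambda>n. real n powr r / (real (Suc n) powr (r+1) - real n powr (r+1))) \<longlonglongrightarrow> inverse (r+1)"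
    using r by real_asymp
  have "(\<lambda>n. t n / real n powr r * (real n powr r / (real (Suc n) powr (r+1) - real n powr (r+1))))
      \<longlonglongrightarrow> L * inverse (r+1)" by (intro tendsto_mult lim q)
  moreover have "eventually (\<lambda>n. t n / real n powr r * (real n powr r / (real (Suc n) powr (r+1) - real n powr (r+1)))
      = ((\<Sum>i<Suc n. t i) - (\<Sum>i<n. t i)) / (real (Suc n) powr (r+1) - real n powr (r+1))) sequentially"
    using eventually_ge_at_top[of 1] by eventually_elim auto
  ultimately show "(\<lambda>n. ((\<Sum>i<Suc n. t i) - (\<Sum>i<n. t i)) / (real (Suc n) powr (r+1) - real n powr (r+1)))
      \<longlonglongrightarrow> L/(r+1)" using Lim_transform_eventually by (fastforce simp: divide_inverse)
qed

lemma final_step: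
  fixes S lam sob :: "nat \<Rightarrow> real"
  assumes hS: "(\<lambda>n. S n / real n powr e) \<longlonglongrightarrow> L" and e: "e > 0"
    and hl: "(\<lambda>n. lam n / real n powr e) \<longlonglongrightarrow> 0"
    and ev: "eventually (\<lambda>n. sob n = lam n + M * (S (Suc n) - K)) sequentially"
  shows "(\<lambda>n. sob n / real n powr e) \<longlonglongrightarrow> M * L"
proof -
  have h1: "(\<lambda>n. S (Suc n) / real (Suc n) powr e) \<longlonglongrightarrow> L"
    using LIMSEQ_Suc[OF hS] by simp
  have h2: "(\<lambda>n. real (Suc n) powr e / real n powr e) \<longlonglongrightarrow> 1" using e by real_asymp
  have h3: "(\<lambda>n. K / real n powr e) \<longlonglongrightarrow> 0" using e by real_asymp
  have "(\<lambda>n. lam n / real n powr e + M * (S (Suc n) / real (Suc n) powr e * (real (Suc n) powr e / real n powr e)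
      - K / real n powr e)) \<longlonglongrightarrow> 0 + M * (L * 1 - 0)"
    by (intro tendsto_intros hl h1 h2 h3)
  moreover have "eventually (\<lambda>n. lam n / real n powr e + M * (S (Suc n) / real (Suc n) powr e * (real (Suc n) powr e / real n powr e)
      - K / real n powr e) = sob n / real n powr e) sequentially"
    using ev eventually_ge_at_top[of 1]
  proof eventually_elim
    case (elim n)
    have "real (Suc n) powr e > 0" by simp
    then show ?case using elim by (simp add: field_simps)
  qed
  ultimately show ?thesis using Lim_transform_eventually by fastforce
qed

theorem theorem1:
  fixes w :: "real \<Rightarrow> real" and I :: "real set" and c :: real
    and p :: "nat \<Rightarrow> real poly" and \<sigma> \<tau> :: "real poly" and lam :: "nat \<Rightarrow> real"
    and M :: real and j :: nat and a b \<gamma> \<delta> :: real and C :: "nat \<Rightarrow> real"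
  assumes cls: "classical_nonsym w I c"
    and orth: "orthonormal_polys w I p"
    and deg_sigma: "degree \<sigma> \<le> 2" and deg_tau: "degree \<tau> \<le> 1"
    and eigen: "\<And>n x. poly \<sigma> x * poly (pderiv (pderiv (p n))) x + poly \<tau> x * poly (pderiv (p n)) x
                        = lam n * poly (p n) x"
    and M_pos: "M > 0"
    and asym: "\<And>k. (\<lambda>n. poly ((pderiv ^^ k) (p n)) c / (C k * (-1) ^ n * real n powr (a * k + b)))
                      \<longlonglongrightarrow> 1"
    and expo: "\<And>k::nat. 2 * (a * real k + b) + 1 > 0"
    and lam: "\<And>n. lam n = \<gamma> * (real n)^2 + \<delta> * real n"
  shows "(\<gamma> \<noteq> 0 \<longrightarrow>
           (\<lambda>n. sob_eigenvalue p lam M j c n / real n powr (2 * (a * j + b) + 3))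
             \<longlonglongrightarrow> 2 * \<gamma> * M * (C j)^2 / ((2 * (a * j + b) + 3) * (2 * (a * j + b) + 1)))
       \<and> (\<gamma> = 0 \<longrightarrow>
           (\<lambda>n. sob_eigenvalue p lam M j c n / real n powr (2 * (a * j + b + 1)))
             \<longlonglongrightarrow> \<delta> * M * (C j)^2 / (2 * (a * j + b + 1) * (2 * (a * j + b) + 1)))"

proof -
  define s where "s = a * real j + b"
  define P where "P i = poly ((pderiv ^^ j) (p i)) c" for i
  define Q where "Q n = (\<Sum>i<n. (P i)^2)" for n
  have s1: "2 * s + 1 > 0" using expo[of j] by (simp add: s_def)
  have Cne: "C j \<noteq> 0"
  proof
    assume "C j = 0"
    hence "(\<lambda>n::nat. 0::real) \<longlonglongrightarrow> 1" using asym[of j] by simp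
    thus False using LIMSEQ_unique[OF tendsto_const] by fastforce
  qed
  have hP: "(\<lambda>n. P n / (C j * (-1) ^ n * real n powr s)) \<longlonglongrightarrow> 1"
    using asym[of j] by (simp add: P_def s_def)
  have hP2: "(\<lambda>n. (P n)^2 / real n powr (2 * s)) \<longlonglongrightarrow> (C j)^2"
  proof -
    have "(\<lambda>n. (P n / (C j * (-1) ^ n * real n powr s))^2 * (C j)^2) \<longlonglongrightarrow> 1^2 * (C j)^2"
      by (intro tendsto_intros hP)
    moreover have "eventually (\<lambda>n. (P n / (C j * (-1) ^ n * real n powr s))^2 * (C j)^2
        = (P n)^2 / real n powr (2 * s)) sequentially"
      using eventually_ge_at_top[of 1]
    proof eventually_elim
      case (elim n)
      have pw: "real n powr (2 * s) = (real n powr s)^2"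
        using elim by (simp add: power2_eq_square flip: powr_add)
      have "((-1::real) ^ n)^2 = 1" by (simp flip: power_mult power_mult_distrib)
      then show ?case using Cne elim unfolding pw by (simp add: power_divide power_mult_distrib)
    qed
    ultimately show ?thesis using Lim_transform_eventually by fastforce
  qed
  have hQ: "(\<lambda>n. Q n / real n powr (2 * s + 1)) \<longlonglongrightarrow> (C j)^2 / (2 * s + 1)"
    unfolding Q_def using sumasym[OF _ hP2] s1 by simp
  have kern: "kernel p m j j c c = Q (Suc m)" for m
    unfolding kernel_def Q_def P_def lessThan_Suc_atMost by (simp add: power2_eq_square)
  have alpha: "sob_alpha p lam j c n = (\<Sum>i<Suc n. T i) - (\<Sum>i<Suc j. T i)"
    if nj: "n \<ge> j" and T: "\<And>i. i \<ge> 1 \<Longrightarrow> (lam i - lam (i - 1)) * Q i = T i" for n T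
  proof (cases "n = j")
    case True then show ?thesis by (simp add: sob_alpha_def)
  next
    case False
    have "sob_alpha p lam j c n = (\<Sum>i\<in>{j+1..n}. T i)"
    proof -
      have T': "\<And>i. Suc j \<le> i \<Longrightarrow> (lam i - lam (i - Suc 0)) * Q i = T i" using T by simp
      show ?thesis unfolding sob_alpha_def using False nj
        by (auto simp: kern T' intro!: sum.cong)
    qed
    also have "\<dots> = (\<Sum>i\<in>{Suc j..<Suc n}. T i)"
      by (simp add: atLeastLessThanSuc_atLeastAtMost)
    also have "\<dots> = (\<Sum>i\<in>{0..<Suc n}. T i) - (\<Sum>i\<in>{0..<Suc j}. T i)"
      by (rule sym, rule sum_diff_nat_ivl) (use nj in auto)
    finally show ?thesis by (simp add: lessThan_atLeast0)
  qed
  have dl: "lam i - lam (i - Suc 0) = \<gamma> * (2 * real i - 1) + \<delta>" if "i \<ge> 1" for i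
    using that by (simp add: lam of_nat_diff Suc_le_eq power2_eq_square algebra_simps)
  show ?thesis
  proof (intro conjI impI)
    assume g: "\<gamma> \<noteq> 0"
    define T where "T i = (\<gamma> * (2 * real i - 1) + \<delta>) * Q i" for i
    have hT: "(\<lambda>n. T n / real n powr (2 * s + 2)) \<longlonglongrightarrow> 2 * \<gamma> * ((C j)^2 / (2 * s + 1))"
    proof -
      have l1: "(\<lambda>n. (\<gamma> * (2 * real n - 1) + \<delta>) / real n) \<longlonglongrightarrow> 2 * \<gamma>" by real_asymp
      have "(\<lambda>n. (\<gamma> * (2 * real n - 1) + \<delta>) / real n * (Q n / real n powr (2 * s + 1)))
          \<longlonglongrightarrow> 2 * \<gamma> * ((C j)^2 / (2 * s + 1))" by (intro tendsto_mult l1 hQ)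
      moreover have "eventually (\<lambda>n. (\<gamma> * (2 * real n - 1) + \<delta>) / real n * (Q n / real n powr (2 * s + 1))
          = T n / real n powr (2 * s + 2)) sequentially"
        using eventually_ge_at_top[of 1]
      proof eventually_elim
        case (elim n)
        have pa: "real n powr (2 * s + 1 + 1) = real n powr (2 * s + 1) * real n powr 1" by (rule powr_add)
        have "real n powr (2 * s + 2) = real n * real n powr (2 * s + 1)"
          using elim pa by (simp add: add.assoc mult.commute)
        then show ?case using elim by (simp add: T_def)
      qed
      ultimately show ?thesis using Lim_transform_eventually by fastforce
    qed
    have hS: "(\<lambda>n. (\<Sum>i<n. T i) / real n powr (2 * s + 3))
        \<longlonglongrightarrow> 2 * \<gamma> * ((C j)^2 / (2 * s + 1)) / (2 * s + 3)"
      using sumasym[OF _ hT] s1 by (simp add: add.assoc)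
    have hl: "(\<lambda>n. lam n / real n powr (2 * s + 3)) \<longlonglongrightarrow> 0"
    proof -
      have "s > -1/2" using s1 by simp
      then have "(\<lambda>n. (\<gamma> * (real n)^2 + \<delta> * real n) / real n powr (2 * s + 3)) \<longlonglongrightarrow> 0" by real_asymp
      then show ?thesis by (simp add: lam)
    qed
    have ev: "eventually (\<lambda>n. sob_eigenvalue p lam M j c n
        = lam n + M * ((\<Sum>i<Suc n. T i) - (\<Sum>i<Suc j. T i))) sequentially"
      using eventually_ge_at_top[of j]
    proof eventually_elim
      case (elim n)
      have "sob_alpha p lam j c n = (\<Sum>i<Suc n. T i) - (\<Sum>i<Suc j. T i)"
        by (rule alpha[OF elim]) (simp add: T_def dl)
      then show ?case unfolding sob_eigenvalue_def by simp
    qed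
    have "(\<lambda>n. sob_eigenvalue p lam M j c n / real n powr (2 * s + 3))
        \<longlonglongrightarrow> M * (2 * \<gamma> * ((C j)^2 / (2 * s + 1)) / (2 * s + 3))"
      by (rule final_step[OF hS _ hl ev]) (use s1 in simp)
    then show "(\<lambda>n. sob_eigenvalue p lam M j c n / real n powr (2 * (a * j + b) + 3))
             \<longlonglongrightarrow> 2 * \<gamma> * M * (C j)^2 / ((2 * (a * j + b) + 3) * (2 * (a * j + b) + 1))"
      by (simp add: s_def field_simps)
  next
    assume g: "\<gamma> = 0"
    define T where "T i = \<delta> * Q i" for i
    have hT: "(\<lambda>n. T n / real n powr (2 * s + 1)) \<longlonglongrightarrow> \<delta> * ((C j)^2 / (2 * s + 1))"
      unfolding T_def using tendsto_mult[OF tendsto_const hQ, of \<delta>] by simp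
    have hS: "(\<lambda>n. (\<Sum>i<n. T i) / real n powr (2 * (s + 1)))
        \<longlonglongrightarrow> \<delta> * ((C j)^2 / (2 * s + 1)) / (2 * s + 2)"
      using sumasym[OF _ hT] s1 by (simp add: algebra_simps)
    have hl: "(\<lambda>n. lam n / real n powr (2 * (s + 1))) \<longlonglongrightarrow> 0"
    proof -
      have "s > -1/2" using s1 by simp
      then have "(\<lambda>n. (0 * (real n)^2 + \<delta> * real n) / real n powr (2 * (s + 1))) \<longlonglongrightarrow> 0" by real_asymp
      then show ?thesis by (simp add: lam g)
    qed
    have ev: "eventually (\<lambda>n. sob_eigenvalue p lam M j c n
        = lam n + M * ((\<Sum>i<Suc n. T i) - (\<Sum>i<Suc j. T i))) sequentially"
      using eventually_ge_at_top[of j]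
    proof eventually_elim
      case (elim n)
      have "sob_alpha p lam j c n = (\<Sum>i<Suc n. T i) - (\<Sum>i<Suc j. T i)"
        by (rule alpha[OF elim]) (simp add: T_def dl g)
      then show ?case unfolding sob_eigenvalue_def by simp
    qed
    have "(\<lambda>n. sob_eigenvalue p lam M j c n / real n powr (2 * (s + 1)))
        \<longlonglongrightarrow> M * (\<delta> * ((C j)^2 / (2 * s + 1)) / (2 * s + 2))"
      by (rule final_step[OF hS _ hl ev]) (use s1 in simp)
    then show "(\<lambda>n. sob_eigenvalue p lam M j c n / real n powr (2 * (a * j + b + 1)))
             \<longlonglongrightarrow> \<delta> * M * (C j)^2 / (2 * (a * j + b + 1) * (2 * (a * j + b) + 1))"
      by (simp add: s_def field_simps)
  qed
qed

end
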